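(* Let $\Gamma$ be a finite, compact, connected, bipartite metric graph with first Betti number $\beta$, and let $B\subset\partial\Gamma$ be nonempty. Then $$\lambda_{k+\beta+|B|-1}\big(L^{\rm a/st,N}(\Gamma,B)\big)=\lambda_k\big(L^{\rm st,D}(\Gamma,B)\big)\qquad\text{for all }k\in\mathbb N.$$
   Context: A finite compact metric graph $\Gamma$ consists of finitely many edges $e_n=[x_{2n-1},x_{2n}]\subset\mathbb R$, $n=1,\dots,E$, of positive lengths and a vertex set $\mathcal V=\{v_1,\dots,v_V\}$ which is a partition of the set of all edge endpoints; the degree of a vertex is the number of endpoints it contains (loops count twice); $\partial\Gamma$ is the set of vertices of degree one; $\beta=E-V+1$. $\Gamma$ is bipartite if $\mathcal V=\mathcal V_1\sqcup\mathcal V_2$ with every edge having one endpoint in a vertex of $\mathcal V_1$ and the other in a vertex of $\mathcal V_2$. $f(x_j)$ denotes the limit of $f$ at endpoint $x_j$, and $\partial f(x_j)=f'(x_j)$ if $x_j$ is a left endpoint, $-f'(x_j)$ if a right endpoint. $L^{\rm st,D}(\Gamma,B)$ acts as $-f''$ on each edge with domain all $f\in W^2_2(\Gamma\setminus\mathcal V)=\bigoplus_nW^2_2(e_n)$ satisfying $f=0$ at each vertex of $B$ and standard conditions ($f(x_i)=f(x_j)$ for $x_i,x_j\in v$, $\sum_{x_j\in v}\partial f(x_j)=0$) at all other vertices $v$. $L^{\rm a/st,N}(\Gamma,B)$ acts as $-f''$ with domain all $f\in W^2_2(\Gamma\setminus\mathcal V)$ satisfying $\partial f=0$ at each vertex of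 $B$ and anti-standard conditions ($\sum_{x_j\in v}f(x_j)=0$, $\partial f(x_i)=\partial f(x_j)$ for $x_i,x_j\in v$) at all other vertices $v$. Eigenvalues $\lambda_1\le\lambda_2\le\dots$ are counted with multiplicities. *)

theory Defs
  imports "HOL-Analysis.Analysis"
begin

text \<open>
  Edge n (0-based, n < E) is the
  interval [x (2n), x (2n+1)]; its left endpoint has index 2n and its right
  endpoint index 2n+1.  The vertex set Vs is a partition of the endpoint
  index set {..< 2E}.
\<close>

definition metric_graph :: "nat \<Rightarrow> (nat \<Rightarrow> real) \<Rightarrow> nat set set \<Rightarrow> bool" where
  "metric_graph E x Vs \<longleftrightarrow>
     (\<forall>n<E. x (2*n) < x (2*n+1)) \<and>
     (\<forall>v\<in>Vs. v \<noteq> {}) \<and>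
     (\<forall>v\<in>Vs. \<forall>w\<in>Vs. v \<noteq> w \<longrightarrow> v \<inter> w = {}) \<and>
     \<Union>Vs = {..<2*E}"

definition edge_rel :: "nat \<Rightarrow> nat set set \<Rightarrow> (nat set \<times> nat set) set" where
  "edge_rel E Vs = {(v,w). v \<in> Vs \<and> w \<in> Vs \<and>
      (\<exists>n<E. (2*n \<in> v \<and> 2*n+1 \<in> w) \<or> (2*n+1 \<in> v \<and> 2*n \<in> w))}"

definition graph_connected :: "nat \<Rightarrow> nat set set \<Rightarrow> bool" where
  "graph_connected E Vs \<longleftrightarrow> (\<forall>v\<in>Vs. \<forall>w\<in>Vs. (v,w) \<in> (edge_rel E Vs)\<^sup>*)"

definition bipartite :: "nat \<Rightarrow> nat set set \<Rightarrow> bool" where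
  "bipartite E Vs \<longleftrightarrow> (\<exists>V1 \<subseteq> Vs. \<forall>n<E. \<forall>v\<in>Vs. \<forall>w\<in>Vs.
      2*n \<in> v \<longrightarrow> 2*n+1 \<in> w \<longrightarrow> (v \<in> V1 \<longleftrightarrow> w \<notin> V1))"

definition degree :: "nat set \<Rightarrow> nat" where
  "degree v = card v"

definition boundary :: "nat set set \<Rightarrow> nat set set" where
  "boundary Vs = {v \<in> Vs. degree v = 1}"

definition betti :: "nat \<Rightarrow> nat set set \<Rightarrow> int" where
  "betti E Vs = int E - int (card Vs) + 1"

text \<open>Functions on the graph: f n is the function on edge n.\<close>

definition edge :: "(nat \<Rightarrow> real) \<Rightarrow> nat \<Rightarrow> real set" where
  "edge x n = {x (2*n) .. x (2*n+1)}"

definition endval :: "(nat \<Rightarrow> real \<Rightarrow> real) \<Rightarrow> (nat \<Rightarrow> real) \<Rightarrow> nat \<Rightarrow> real" where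
  "endval f x j = f (j div 2) (x j)"

definition endder :: "(nat \<Rightarrow> real \<Rightarrow> real) \<Rightarrow> (nat \<Rightarrow> real) \<Rightarrow> nat \<Rightarrow> real" where
  "endder d x j = (if even j then d (j div 2) (x j) else - d (j div 2) (x j))"

definition solves_edges ::
  "nat \<Rightarrow> (nat \<Rightarrow> real) \<Rightarrow> real \<Rightarrow> (nat \<Rightarrow> real \<Rightarrow> real) \<Rightarrow> (nat \<Rightarrow> real \<Rightarrow> real) \<Rightarrow> bool" where
  "solves_edges E x lam f d \<longleftrightarrow>
     (\<forall>n<E. \<exists>d2. \<forall>t\<in>edge x n.
        (f n has_real_derivative d n t) (at t within edge x n) \<and>
        (d n has_real_derivative d2 t) (at t within edge x n) \<and>
        - d2 t = lam * f n t)"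

definition standard_cond :: "nat set \<Rightarrow> (nat \<Rightarrow> real) \<Rightarrow> (nat \<Rightarrow> real) \<Rightarrow> bool" where
  "standard_cond v fv dv \<longleftrightarrow> (\<forall>i\<in>v. \<forall>j\<in>v. fv i = fv j) \<and> (\<Sum>j\<in>v. dv j) = 0"

definition antistandard_cond :: "nat set \<Rightarrow> (nat \<Rightarrow> real) \<Rightarrow> (nat \<Rightarrow> real) \<Rightarrow> bool" where
  "antistandard_cond v fv dv \<longleftrightarrow> (\<Sum>j\<in>v. fv j) = 0 \<and> (\<forall>i\<in>v. \<forall>j\<in>v. dv i = dv j)"

text \<open>Eigenfunctions (with eigenvalue lam, zero function allowed) of L^{st,D}(Gamma,B).\<close>
definition eigfun_stD ::
  "nat \<Rightarrow> (nat \<Rightarrow> real) \<Rightarrow> nat set set \<Rightarrow> nat set set \<Rightarrow> real \<Rightarrow> (nat \<Rightarrow> real \<Rightarrow> real) \<Rightarrow> bool" where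
  "eigfun_stD E x Vs B lam f \<longleftrightarrow> (\<exists>d. solves_edges E x lam f d \<and>
      (\<forall>v\<in>B. \<forall>j\<in>v. endval f x j = 0) \<and>
      (\<forall>v\<in>Vs - B. standard_cond v (endval f x) (endder d x)))"

definition eigfun_astN ::
  "nat \<Rightarrow> (nat \<Rightarrow> real) \<Rightarrow> nat set set \<Rightarrow> nat set set \<Rightarrow> real \<Rightarrow> (nat \<Rightarrow> real \<Rightarrow> real) \<Rightarrow> bool" where
  "eigfun_astN E x Vs B lam f \<longleftrightarrow> (\<exists>d. solves_edges E x lam f d \<and>
      (\<forall>v\<in>B. \<forall>j\<in>v. endder d x j = 0) \<and>
      (\<forall>v\<in>Vs - B. antistandard_cond v (endval f x) (endder d x)))"

definition lin_indep :: "nat \<Rightarrow> (nat \<Rightarrow> real) \<Rightarrow> nat \<Rightarrow> (nat \<Rightarrow> nat \<Rightarrow> real \<Rightarrow> real) \<Rightarrow> bool" where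
  "lin_indep E x m phi \<longleftrightarrow>
     (\<forall>c. (\<forall>n<E. \<forall>t\<in>edge x n. (\<Sum>i<m. c i * phi i n t) = 0) \<longrightarrow> (\<forall>i<m. c i = 0))"

definition multiplicity ::
  "nat \<Rightarrow> (nat \<Rightarrow> real) \<Rightarrow> (real \<Rightarrow> (nat \<Rightarrow> real \<Rightarrow> real) \<Rightarrow> bool) \<Rightarrow> real \<Rightarrow> nat" where
  "multiplicity E x P lam = Sup {m. \<exists>phi. (\<forall>i<m. P lam (phi i)) \<and> lin_indep E x m phi}"

definition count_eig ::
  "nat \<Rightarrow> (nat \<Rightarrow> real) \<Rightarrow> (real \<Rightarrow> (nat \<Rightarrow> real \<Rightarrow> real) \<Rightarrow> bool) \<Rightarrow> real \<Rightarrow> nat" where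
  "count_eig E x P mu = (\<Sum>lam\<in>{lam. lam \<le> mu \<and> multiplicity E x P lam > 0}. multiplicity E x P lam)"

text \<open>k-th eigenvalue (k \<ge> 1), counted with multiplicities, in nondecreasing order.\<close>
definition eigenvalue ::
  "nat \<Rightarrow> (nat \<Rightarrow> real) \<Rightarrow> (real \<Rightarrow> (nat \<Rightarrow> real \<Rightarrow> real) \<Rightarrow> bool) \<Rightarrow> nat \<Rightarrow> real" where
  "eigenvalue E x P k = (LEAST mu. k \<le> count_eig E x P mu)"

end

theory Submission
  imports Defs "HOL-Library.Function_Algebras"
begin

lemma mg_facts:
  assumes "metric_graph E x Vs"
  shows "finite Vs" "\<And>v. v\<in>Vs \<Longrightarrow> finite v" "\<And>v j. v\<in>Vs \<Longrightarrow> j\<in>v \<Longrightarrow> j < 2*E"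
    "\<And>j. j<2*E \<Longrightarrow> \<exists>v\<in>Vs. j\<in>v"
    "\<And>v w j. v\<in>Vs \<Longrightarrow> w\<in>Vs \<Longrightarrow> j\<in>v \<Longrightarrow> j\<in>w \<Longrightarrow> v = w"
    "\<And>n. n<E \<Longrightarrow> x (2*n) < x(2*n+1)"
    "\<And>v. v\<in>Vs \<Longrightarrow> v \<noteq> {}"
proof -
  have U: "\<Union>Vs = {..<2*E}" using assms by (simp add: metric_graph_def)
  have fU: "finite (\<Union>Vs)" unfolding U by simp
  then show "finite Vs" by (rule finite_UnionD)
  show "finite v" if "v\<in>Vs" for v
  proof (rule finite_subset[OF _ fU])
    show "v \<subseteq> \<Union>Vs" using that by (rule Union_upper)
  qed
  show "j < 2*E" if "v\<in>Vs" "j\<in>v" for v j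
  proof -
    have "j \<in> \<Union>Vs" using that by (rule UnionI)
    then show ?thesis unfolding U by simp
  qed
  show "\<exists>v\<in>Vs. j\<in>v" if "j<2*E" for j
  proof -
    have "j \<in> \<Union>Vs" unfolding U using that by simp
    then show ?thesis by (rule UnionE) (rule bexI)
  qed
  have D: "\<forall>v\<in>Vs. \<forall>w\<in>Vs. v \<noteq> w \<longrightarrow> v \<inter> w = {}" using assms by (simp add: metric_graph_def)
  show "v = w" if "v\<in>Vs" "w\<in>Vs" "j\<in>v" "j\<in>w" for v w j
  proof (rule ccontr)
    assume "v \<noteq> w"
    then have "v \<inter> w = {}" using D that(1,2) by simp
    then show False using that(3,4) by (simp add: disjoint_iff)
  qed
  show "\<And>n. n<E \<Longrightarrow> x (2*n) < x(2*n+1)" using assms by (simp add: metric_graph_def)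
  show "\<And>v. v\<in>Vs \<Longrightarrow> v \<noteq> {}" using assms by (simp add: metric_graph_def)
qed

lemma sum_vertices:
  assumes "metric_graph E x Vs"
  shows "(\<Sum>j<2*E. g j) = (\<Sum>v\<in>Vs. \<Sum>j\<in>v. (g j::real))"
proof -
  have U: "\<Union>Vs = {..<2*E}" using assms by (simp add: metric_graph_def)
  have "sum g (\<Union>Vs) = (sum \<circ> sum) g Vs"
  proof (rule sum.Union_disjoint)
    show "\<forall>A\<in>Vs. finite A" using mg_facts(2)[OF assms] by simp
    show "\<forall>A\<in>Vs. \<forall>B\<in>Vs. A \<noteq> B \<longrightarrow> A \<inter> B = {}" using assms by (simp add: metric_graph_def)
  qed
  then show ?thesis using U by (simp add: o_def)
qed

lemma sum_pairs: "(\<Sum>n<(N::nat). g (2*n) + g (2*n+1)) = (\<Sum>j<2*N. (g j::real))"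
  by (induction N) (simp_all add: sum.lessThan_Suc)

lemma solves_edges_iff:
  "solves_edges E x lam f d \<longleftrightarrow> (\<forall>n<E. \<forall>t\<in>edge x n.
     (f n has_real_derivative d n t) (at t within edge x n) \<and>
     (d n has_real_derivative (- (lam * f n t))) (at t within edge x n))"
proof
  assume "solves_edges E x lam f d"
  then show "\<forall>n<E. \<forall>t\<in>edge x n.
     (f n has_real_derivative d n t) (at t within edge x n) \<and>
     (d n has_real_derivative (- (lam * f n t))) (at t within edge x n)"
    unfolding solves_edges_def
    by (metis minus_minus)
next
  assume "\<forall>n<E. \<forall>t\<in>edge x n.
     (f n has_real_derivative d n t) (at t within edge x n) \<and>
     (d n has_real_derivative (- (lam * f n t))) (at t within edge x n)"
  then show "solves_edges E x lam f d"
    unfolding solves_edges_def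
    by (intro allI impI exI[of _ "\<lambda>t. - (lam * f _ t)"]) auto
qed

lemma deriv_zero_on_interval:
  fixes h :: "real \<Rightarrow> real"
  assumes "a < b" "t \<in> {a..b}" "(h has_real_derivative D) (at t within {a..b})" "\<forall>s\<in>{a..b}. h s = 0"
  shows "D = 0"
proof -
  have "((\<lambda>_. 0) has_real_derivative D) (at t within {a..b})"
    using has_field_derivative_transform_within[OF assms(3), of 1 "\<lambda>_. 0"] assms by auto
  moreover have "((\<lambda>_. 0) has_real_derivative 0) (at t within {a..b})" by simp
  ultimately show ?thesis
    using vector_derivative_unique_within_closed_interval[of a b t "\<lambda>_. 0" D 0] assms(1,2)
    unfolding has_real_derivative_iff_has_vector_derivative cbox_interval by simp
qed

lemma comb_zero:
  assumes mg: "metric_graph E x Vs" and se: "\<forall>i<m. solves_edges E x lam (phi i) (d i)"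
    and lam: "lam \<noteq> 0" and n: "n < E"
    and z: "\<forall>t\<in>edge x n. (\<Sum>i<m. c i * d i n t) = 0" and t: "t \<in> edge x n"
  shows "(\<Sum>i<m. c i * phi i n t) = 0"
proof -
  have "((\<lambda>s. \<Sum>i<m. c i * d i n s) has_real_derivative (\<Sum>i<m. c i * (- (lam * phi i n t))))
        (at t within edge x n)"
    using se n t unfolding solves_edges_iff
    by (intro DERIV_sum DERIV_cmult) auto
  then have der: "((\<lambda>s. \<Sum>i<m. c i * d i n s) has_real_derivative (\<Sum>i<m. c i * (- (lam * phi i n t))))
        (at t within {x (2*n)..x (2*n+1)})" unfolding edge_def .
  have "(\<Sum>i<m. c i * (- (lam * phi i n t))) = 0"
    apply (rule deriv_zero_on_interval[OF _ _ der])
    using mg_facts(6)[OF mg n] t z unfolding edge_def by auto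
  moreover have "(\<Sum>i<m. c i * (- (lam * phi i n t))) = - lam * (\<Sum>i<m. c i * phi i n t)"
    by (simp add: sum_distrib_left algebra_simps)
  ultimately show ?thesis using lam by simp
qed

lemma energy:
  assumes mg: "metric_graph E x Vs" and se: "solves_edges E x lam f d"
    and bd: "(\<Sum>j<2*E. endval f x j * endder d x j) = 0" and lam: "lam \<le> 0"
    and n: "n < E" and t: "t \<in> edge x n"
  shows "d n t = 0 \<and> (lam < 0 \<longrightarrow> f n t = 0)"
proof -
  define I where "I m = f m (x (2*m+1)) * d m (x (2*m+1)) - f m (x (2*m)) * d m (x (2*m))" for m
  define g where "g m s = (d m s)^2 - lam * (f m s)^2" for m s
  have der: "(f m has_real_derivative d m s) (at s within edge x m) \<and>
     (d m has_real_derivative (- (lam * f m s))) (at s within edge x m)" if "m < E" "s \<in> edge x m" for m s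
    using se that unfolding solves_edges_iff by blast
  have int: "(g m has_integral I m) {x (2*m)..x (2*m+1)}" if m: "m < E" for m
  proof -
    have "((\<lambda>s. f m s * d m s) has_real_derivative g m s) (at s within {x (2*m)..x (2*m+1)})"
      if "s \<in> {x (2*m)..x (2*m+1)}" for s
      using der[OF m, of s] that unfolding edge_def
      by (intro DERIV_cong[OF DERIV_mult]) (auto simp: g_def power2_eq_square algebra_simps)
    then show ?thesis unfolding I_def
      using fundamental_theorem_of_calculus[of "x (2*m)" "x (2*m+1)" "\<lambda>s. f m s * d m s" "g m"]
        mg_facts(6)[OF mg m]
      by (simp add: has_real_derivative_iff_has_vector_derivative)
  qed
  have gnn: "0 \<le> g m s" for m s
  proof -
    have "lam * (f m s)^2 \<le> 0" using lam by (simp add: mult_nonpos_nonneg)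
    then show ?thesis unfolding g_def using zero_le_power2[of "d m s"] by linarith
  qed
  have Inn: "0 \<le> I m" if "m < E" for m
    using has_integral_nonneg[OF int[OF that]] gnn by blast
  have "(\<Sum>m<E. I m) = - (\<Sum>m<E. endval f x (2*m) * endder d x (2*m) + endval f x (2*m+1) * endder d x (2*m+1))"
    unfolding I_def endval_def endder_def sum_negf[symmetric]
    by (intro sum.cong refl) auto
  also have "\<dots> = 0" using bd sum_pairs[of "\<lambda>j. endval f x j * endder d x j" E] by simp
  finally have "I n = 0" using Inn n sum_nonneg_eq_0_iff[of "{..<E}" I] by auto
  then have "(g n has_integral 0) (cbox (x (2*n)) (x (2*n+1)))" using int[OF n] by simp
  moreover have "continuous_on (cbox (x (2*n)) (x (2*n+1))) (g n)"
  proof -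
    have "continuous_on (edge x n) (f n)" "continuous_on (edge x n) (d n)"
      using der[OF n] by (auto intro!: DERIV_continuous_on)
    then show ?thesis unfolding g_def edge_def cbox_interval
      by (intro continuous_intros) auto
  qed
  moreover have "box (x (2*n)) (x (2*n+1)) \<noteq> {}" using mg_facts(6)[OF mg n]
    by (simp add: box_real)
  ultimately have "g n t = 0" using has_integral_0_cbox_imp_0[of "x (2*n)" "x (2*n+1)" "g n" t] gnn t
    unfolding edge_def cbox_interval by blast
  moreover have "lam * (f n t)^2 \<le> 0" using lam by (simp add: mult_nonpos_nonneg)
  ultimately have "(d n t)^2 = 0" "lam * (f n t)^2 = 0" unfolding g_def
    using zero_le_power2[of "d n t"] by linarith+
  then show ?thesis by auto
qed

lemma bd_stD:
  assumes mg: "metric_graph E x Vs" and BV: "B \<subseteq> Vs"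
    and b: "\<forall>v\<in>B. \<forall>j\<in>v. endval f x j = 0"
    and s: "\<forall>v\<in>Vs - B. standard_cond v (endval f x) (endder d x)"
  shows "(\<Sum>j<2*E. endval f x j * endder d x j) = 0"
proof -
  have "(\<Sum>j\<in>v. endval f x j * endder d x j) = 0" if v: "v \<in> Vs" for v
  proof (cases "v \<in> B")
    case True then show ?thesis using b by simp
  next
    case False
    obtain j0 where j0: "j0 \<in> v" using mg_facts(7)[OF mg v] by blast
    have eqv: "\<forall>i\<in>v. \<forall>j\<in>v. endval f x i = endval f x j"
      using s v False unfolding standard_cond_def by blast
    have "(\<Sum>j\<in>v. endval f x j * endder d x j) = (\<Sum>j\<in>v. endval f x j0 * endder d x j)"
    proof (rule sum.cong[OF refl])
      fix j assume "j \<in> v"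
      then have "endval f x j = endval f x j0" using eqv j0 by blast
      then show "endval f x j * endder d x j = endval f x j0 * endder d x j" by (rule arg_cong)
    qed
    also have "\<dots> = endval f x j0 * (\<Sum>j\<in>v. endder d x j)" by (simp add: sum_distrib_left)
    also have "\<dots> = 0"
    proof -
      have "(\<Sum>j\<in>v. endder d x j) = 0" using s v False unfolding standard_cond_def by blast
      then show ?thesis by simp
    qed
    finally show ?thesis .
  qed
  then show ?thesis unfolding sum_vertices[OF mg] by simp
qed

lemma bd_astN:
  assumes mg: "metric_graph E x Vs" and BV: "B \<subseteq> Vs"
    and b: "\<forall>v\<in>B. \<forall>j\<in>v. endder d x j = 0"
    and s: "\<forall>v\<in>Vs - B. antistandard_cond v (endval f x) (endder d x)"
  shows "(\<Sum>j<2*E. endval f x j * endder d x j) = 0"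
proof -
  have "(\<Sum>j\<in>v. endval f x j * endder d x j) = 0" if v: "v \<in> Vs" for v
  proof (cases "v \<in> B")
    case True then show ?thesis using b by simp
  next
    case False
    obtain j0 where j0: "j0 \<in> v" using mg_facts(7)[OF mg v] by blast
    have eqv: "\<forall>i\<in>v. \<forall>j\<in>v. endder d x i = endder d x j"
      using s v False unfolding antistandard_cond_def by blast
    have "(\<Sum>j\<in>v. endval f x j * endder d x j) = (\<Sum>j\<in>v. endval f x j * endder d x j0)"
    proof (rule sum.cong[OF refl])
      fix j assume "j \<in> v"
      then have "endder d x j = endder d x j0" using eqv j0 by blast
      then show "endval f x j * endder d x j = endval f x j * endder d x j0" by simp
    qed
    also have "\<dots> = (\<Sum>j\<in>v. endval f x j) * endder d x j0" by (simp add: sum_distrib_right)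
    also have "\<dots> = 0"
    proof -
      have "(\<Sum>j\<in>v. endval f x j) = 0" using s v False unfolding antistandard_cond_def by blast
      then show ?thesis by simp
    qed
    finally show ?thesis .
  qed
  then show ?thesis unfolding sum_vertices[OF mg] by simp
qed

lemma const_on_edge:
  assumes mg: "metric_graph E x Vs" and se: "solves_edges E x lam f d"
    and d0: "\<forall>n<E. \<forall>t\<in>edge x n. d n t = 0" and n: "n < E" and t: "t \<in> edge x n"
  shows "f n t = endval f x (2*n)" "endval f x (2*n+1) = endval f x (2*n)"
proof -
  have "\<exists>c. \<forall>s\<in>edge x n. f n s = c"
  proof (rule has_field_derivative_zero_constant)
    show "convex (edge x n)" unfolding edge_def by (rule convex_real_interval)
    show "(f n has_field_derivative 0) (at s within edge x n)" if "s \<in> edge x n" for s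
      using se d0 n that unfolding solves_edges_iff by force
  qed
  then obtain c where c: "\<forall>s\<in>edge x n. f n s = c" by blast
  have ab: "x (2*n) \<in> edge x n" "x (2*n+1) \<in> edge x n"
    using mg_facts(6)[OF mg n] unfolding edge_def by auto
  show "f n t = endval f x (2*n)" using c t ab unfolding endval_def by simp
  show "endval f x (2*n+1) = endval f x (2*n)" using c ab unfolding endval_def by simp
qed

lemma stD_nonpos_zero:
  assumes mg: "metric_graph E x Vs" and conn: "graph_connected E Vs"
    and BV: "B \<subseteq> Vs" and Bne: "B \<noteq> {}"
    and ef: "eigfun_stD E x Vs B lam f" and lam: "lam \<le> 0"
  shows "\<forall>n<E. \<forall>t\<in>edge x n. f n t = 0"
proof -
  obtain d where se: "solves_edges E x lam f d" and b: "\<forall>v\<in>B. \<forall>j\<in>v. endval f x j = 0"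
    and s: "\<forall>v\<in>Vs - B. standard_cond v (endval f x) (endder d x)"
    using ef unfolding eigfun_stD_def by blast
  have bd: "(\<Sum>j<2*E. endval f x j * endder d x j) = 0" by (rule bd_stD[OF mg BV b s])
  show ?thesis
  proof (cases "lam < 0")
    case True then show ?thesis using energy[OF mg se bd lam] by blast
  next
    case False
    then have lam0: "lam = 0" using lam by simp
    have d0: "\<forall>n<E. \<forall>t\<in>edge x n. d n t = 0" using energy[OF mg se bd lam] by blast
    note ce = const_on_edge[OF mg se d0]
    obtain b0 where b0: "b0 \<in> B" using Bne by blast
    have Z: "\<forall>j\<in>v. endval f x j = 0" if "v \<in> Vs" for v
    proof -
      have "(b0, v) \<in> (edge_rel E Vs)\<^sup>*" using conn b0 BV that unfolding graph_connected_def by blast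
      then show ?thesis
      proof (induction rule: rtrancl_induct)
        case base then show ?case using b b0 by blast
      next
        case (step w z)
        from step.hyps(2) obtain n where w: "w \<in> Vs" and z: "z \<in> Vs" and n: "n < E"
          and e: "(2*n \<in> w \<and> 2*n+1 \<in> z) \<or> (2*n+1 \<in> w \<and> 2*n \<in> z)"
          unfolding edge_rel_def by blast
        have "x (2*n) \<in> edge x n" using mg_facts(6)[OF mg n] unfolding edge_def by simp
        then have eq: "endval f x (2*n+1) = endval f x (2*n)" using ce(2)[OF n] by blast
        have "\<exists>j0\<in>z. endval f x j0 = 0"
          using e
        proof (elim disjE conjE)
          assume "2*n \<in> w" "2*n+1 \<in> z"
          then show ?thesis using step.IH eq by metis
        next
          assume "2*n+1 \<in> w" "2*n \<in> z"
          then show ?thesis using step.IH eq by metis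
        qed
        then obtain j0 where j0: "j0 \<in> z" "endval f x j0 = 0" by blast
        show ?case
        proof (cases "z \<in> B")
          case True then show ?thesis using b by blast
        next
          case False
          then have "\<forall>i\<in>z. \<forall>j\<in>z. endval f x i = endval f x j"
            using s z unfolding standard_cond_def by blast
          then show ?thesis using j0 by metis
        qed
      qed
    qed
    show ?thesis
    proof (intro allI impI ballI)
      fix n t assume n: "n < E" and t: "t \<in> edge x n"
      obtain v where "v \<in> Vs" "2*n \<in> v" using mg_facts(4)[OF mg, of "2*n"] n by auto
      then show "f n t = 0" using Z ce(1)[OF n t] by metis
    qed
  qed
qed

lemma astN_neg_zero:
  assumes mg: "metric_graph E x Vs" and BV: "B \<subseteq> Vs"
    and ef: "eigfun_astN E x Vs B lam f" and lam: "lam < 0"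
  shows "\<forall>n<E. \<forall>t\<in>edge x n. f n t = 0"
proof -
  obtain d where se: "solves_edges E x lam f d" and b: "\<forall>v\<in>B. \<forall>j\<in>v. endder d x j = 0"
    and s: "\<forall>v\<in>Vs - B. antistandard_cond v (endval f x) (endder d x)"
    using ef unfolding eigfun_astN_def by blast
  have bd: "(\<Sum>j<2*E. endval f x j * endder d x j) = 0" by (rule bd_astN[OF mg BV b s])
  show ?thesis using energy[OF mg se bd] lam by auto
qed

lemma astN_zero_const:
  assumes mg: "metric_graph E x Vs" and BV: "B \<subseteq> Vs"
    and ef: "eigfun_astN E x Vs B 0 f"
  shows "\<forall>n<E. \<forall>t\<in>edge x n. f n t = endval f x (2*n)"
    "\<forall>v\<in>Vs - B. (\<Sum>j\<in>v. endval f x j) = 0"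
proof -
  obtain d where se: "solves_edges E x 0 f d" and b: "\<forall>v\<in>B. \<forall>j\<in>v. endder d x j = 0"
    and s: "\<forall>v\<in>Vs - B. antistandard_cond v (endval f x) (endder d x)"
    using ef unfolding eigfun_astN_def by blast
  have bd: "(\<Sum>j<2*E. endval f x j * endder d x j) = 0" by (rule bd_astN[OF mg BV b s])
  have d0: "\<forall>n<E. \<forall>t\<in>edge x n. d n t = 0" using energy[OF mg se bd] by auto
  show "\<forall>n<E. \<forall>t\<in>edge x n. f n t = endval f x (2*n)" using const_on_edge(1)[OF mg se d0] by blast
  show "\<forall>v\<in>Vs - B. (\<Sum>j\<in>v. endval f x j) = 0" using s unfolding antistandard_cond_def by blast
qed

definition rho :: "nat set set \<Rightarrow> nat \<Rightarrow> real" where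
  "rho V1 j = (if \<exists>v\<in>V1. j \<in> v then 1 else -1)"

definition sg :: "nat set set \<Rightarrow> nat \<Rightarrow> real" where
  "sg V1 n = rho V1 (2*n)"

lemma sg_nz: "sg V1 n \<noteq> 0" unfolding sg_def rho_def by simp

lemma rho_vertex:
  assumes mg: "metric_graph E x Vs" and V1: "V1 \<subseteq> Vs" and v: "v \<in> Vs" and j: "j \<in> v"
  shows "rho V1 j = (if v \<in> V1 then 1 else -1)"
proof (cases "v \<in> V1")
  case True then show ?thesis using j unfolding rho_def by auto
next
  case False
  have "\<not> (\<exists>w\<in>V1. j \<in> w)"
  proof
    assume "\<exists>w\<in>V1. j \<in> w"
    then obtain w where w: "w \<in> V1" "j \<in> w" by blast
    then have "w = v" using mg_facts(5)[OF mg _ v _ j] V1 by blast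
    then show False using w False by simp
  qed
  then show ?thesis using False unfolding rho_def by simp
qed

lemma rho_even_odd:
  assumes mg: "metric_graph E x Vs" and V1: "V1 \<subseteq> Vs"
    and bip: "\<forall>n<E. \<forall>v\<in>Vs. \<forall>w\<in>Vs. 2*n \<in> v \<longrightarrow> 2*n+1 \<in> w \<longrightarrow> (v \<in> V1 \<longleftrightarrow> w \<notin> V1)"
    and j: "j < 2*E"
  shows "rho V1 j = (if even j then sg V1 (j div 2) else - sg V1 (j div 2))"
proof (cases "even j")
  case True
  then have "j = 2 * (j div 2)" by simp
  then show ?thesis using True unfolding sg_def by metis
next
  case False
  define n where "n = j div 2"
  have jn: "j = 2*n+1" using False unfolding n_def by simp
  have n: "n < E" using j jn by simp
  obtain v where v: "v \<in> Vs" "2*n \<in> v" using mg_facts(4)[OF mg, of "2*n"] n by auto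
  obtain w where w: "w \<in> Vs" "2*n+1 \<in> w" using mg_facts(4)[OF mg, of "2*n+1"] n by auto
  have "v \<in> V1 \<longleftrightarrow> w \<notin> V1" using bip n v w by blast
  then have "rho V1 (2*n+1) = - rho V1 (2*n)"
    using rho_vertex[OF mg V1 v(1) v(2)] rho_vertex[OF mg V1 w(1) w(2)] by auto
  then show ?thesis using False jn unfolding sg_def n_def by simp
qed

lemma endval_sg:
  assumes mg: "metric_graph E x Vs" and V1: "V1 \<subseteq> Vs"
    and bip: "\<forall>n<E. \<forall>v\<in>Vs. \<forall>w\<in>Vs. 2*n \<in> v \<longrightarrow> 2*n+1 \<in> w \<longrightarrow> (v \<in> V1 \<longleftrightarrow> w \<notin> V1)"
    and j: "j < 2*E"
  shows "endval (\<lambda>n t. sg V1 n * h n t) x j = rho V1 j * endder h x j"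
  using rho_even_odd[OF mg V1 bip j] unfolding endval_def endder_def by auto

lemma endder_sg:
  assumes mg: "metric_graph E x Vs" and V1: "V1 \<subseteq> Vs"
    and bip: "\<forall>n<E. \<forall>v\<in>Vs. \<forall>w\<in>Vs. 2*n \<in> v \<longrightarrow> 2*n+1 \<in> w \<longrightarrow> (v \<in> V1 \<longleftrightarrow> w \<notin> V1)"
    and j: "j < 2*E"
  shows "endder (\<lambda>n t. sg V1 n * h n t) x j = rho V1 j * endval h x j"
  using rho_even_odd[OF mg V1 bip j] unfolding endval_def endder_def by auto

lemma rho_const:
  assumes mg: "metric_graph E x Vs" and V1: "V1 \<subseteq> Vs" and v: "v \<in> Vs" and i: "i \<in> v" and j: "j \<in> v"
  shows "rho V1 i = rho V1 j"
  using rho_vertex[OF mg V1 v i] rho_vertex[OF mg V1 v j] by simp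

lemma T_eig:
  assumes mg: "metric_graph E x Vs" and V1: "V1 \<subseteq> Vs"
    and bip: "\<forall>n<E. \<forall>v\<in>Vs. \<forall>w\<in>Vs. 2*n \<in> v \<longrightarrow> 2*n+1 \<in> w \<longrightarrow> (v \<in> V1 \<longleftrightarrow> w \<notin> V1)"
    and BV: "B \<subseteq> Vs"
    and se: "solves_edges E x lam f d" and b: "\<forall>v\<in>B. \<forall>j\<in>v. endval f x j = 0"
    and s: "\<forall>v\<in>Vs - B. standard_cond v (endval f x) (endder d x)"
  shows "eigfun_astN E x Vs B lam (\<lambda>n t. sg V1 n * d n t)"
  unfolding eigfun_astN_def
proof (intro exI conjI)
  let ?h = "\<lambda>n t. - (lam * f n t)"
  let ?e = "\<lambda>n t. sg V1 n * ?h n t"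
  have hv: "endval ?h x j = - (lam * endval f x j)" for j unfolding endval_def by simp
  show "solves_edges E x lam (\<lambda>n t. sg V1 n * d n t) ?e"
    unfolding solves_edges_iff
  proof (intro allI impI ballI conjI)
    fix n t assume n: "n < E" and t: "t \<in> edge x n"
    have D: "(f n has_real_derivative d n t) (at t within edge x n)"
      "(d n has_real_derivative (- (lam * f n t))) (at t within edge x n)"
      using se n t unfolding solves_edges_iff by auto
    show "((\<lambda>t. sg V1 n * d n t) has_real_derivative ?e n t) (at t within edge x n)"
      using D(2) by (rule DERIV_cmult)
    show "(?e n has_real_derivative - (lam * (sg V1 n * d n t))) (at t within edge x n)"
      by (rule DERIV_cong[OF DERIV_cmult[OF DERIV_minus[OF DERIV_cmult[OF D(1)]]]]) simp
  qed
  show "\<forall>v\<in>B. \<forall>j\<in>v. endder ?e x j = 0"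
  proof (intro ballI)
    fix v j assume v: "v \<in> B" and j: "j \<in> v"
    have jE: "j < 2*E" using mg_facts(3)[OF mg _ j] v BV by blast
    show "endder ?e x j = 0" using endder_sg[OF mg V1 bip jE, of ?h] hv b v j by simp
  qed
  show "\<forall>v\<in>Vs - B. antistandard_cond v (endval (\<lambda>n t. sg V1 n * d n t) x) (endder ?e x)"
  proof
    fix v assume v: "v \<in> Vs - B"
    have jE: "j < 2*E" if "j \<in> v" for j using mg_facts(3)[OF mg _ that] v by blast
    obtain j0 where j0: "j0 \<in> v" using mg_facts(7)[OF mg] v by blast
    have eqv: "\<forall>i\<in>v. \<forall>j\<in>v. endval f x i = endval f x j"
      using s v unfolding standard_cond_def by blast
    have sd: "(\<Sum>j\<in>v. endder d x j) = 0" using s v unfolding standard_cond_def by blast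
    have "(\<Sum>j\<in>v. endval (\<lambda>n t. sg V1 n * d n t) x j) = (\<Sum>j\<in>v. rho V1 j0 * endder d x j)"
    proof (rule sum.cong[OF refl])
      fix j assume j: "j \<in> v"
      show "endval (\<lambda>n t. sg V1 n * d n t) x j = rho V1 j0 * endder d x j"
        using endval_sg[OF mg V1 bip jE[OF j], of d] rho_const[OF mg V1 _ j j0] v by simp
    qed
    also have "\<dots> = 0" using sd by (simp add: sum_distrib_left[symmetric])
    finally have S1: "(\<Sum>j\<in>v. endval (\<lambda>n t. sg V1 n * d n t) x j) = 0" .
    have S2: "endder ?e x i = endder ?e x j" if i: "i \<in> v" and j: "j \<in> v" for i j
    proof -
      have "endder ?e x i = rho V1 i * (- (lam * endval f x i))"
        using endder_sg[OF mg V1 bip jE[OF i], of ?h] hv by simp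
      also have "\<dots> = rho V1 j * (- (lam * endval f x j))"
      proof -
        have "endval f x i = endval f x j" using eqv i j by blast
        moreover have "rho V1 i = rho V1 j" using rho_const[OF mg V1 _ i j] v by blast
        ultimately show ?thesis by simp
      qed
      also have "\<dots> = endder ?e x j"
        using endder_sg[OF mg V1 bip jE[OF j], of ?h] hv by simp
      finally show ?thesis .
    qed
    show "antistandard_cond v (endval (\<lambda>n t. sg V1 n * d n t) x) (endder ?e x)"
      unfolding antistandard_cond_def using S1 S2 by blast
  qed
qed

lemma S_eig:
  assumes mg: "metric_graph E x Vs" and V1: "V1 \<subseteq> Vs"
    and bip: "\<forall>n<E. \<forall>v\<in>Vs. \<forall>w\<in>Vs. 2*n \<in> v \<longrightarrow> 2*n+1 \<in> w \<longrightarrow> (v \<in> V1 \<longleftrightarrow> w \<notin> V1)"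
    and BV: "B \<subseteq> Vs" and lam: "lam \<noteq> 0"
    and se: "solves_edges E x lam g e" and b: "\<forall>v\<in>B. \<forall>j\<in>v. endder e x j = 0"
    and s: "\<forall>v\<in>Vs - B. antistandard_cond v (endval g x) (endder e x)"
  shows "eigfun_stD E x Vs B lam (\<lambda>n t. sg V1 n * (e n t / (- lam)))"
  unfolding eigfun_stD_def
proof (intro exI conjI)
  let ?h = "\<lambda>n t. e n t / (- lam)"
  let ?f = "\<lambda>n t. sg V1 n * ?h n t"
  let ?d = "\<lambda>n t. sg V1 n * g n t"
  have hd: "endder ?h x j = endder e x j / (- lam)" for j unfolding endder_def by simp
  show "solves_edges E x lam ?f ?d"
    unfolding solves_edges_iff
  proof (intro allI impI ballI conjI)
    fix n t assume n: "n < E" and t: "t \<in> edge x n"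
    have D: "(g n has_real_derivative e n t) (at t within edge x n)"
      "(e n has_real_derivative (- (lam * g n t))) (at t within edge x n)"
      using se n t unfolding solves_edges_iff by auto
    have "((\<lambda>t. e n t / (- lam)) has_real_derivative g n t) (at t within edge x n)"
      by (rule DERIV_cong[OF DERIV_cdivide[OF D(2)]]) (use lam in simp)
    then show "(?f n has_real_derivative ?d n t) (at t within edge x n)"
      by (rule DERIV_cmult)
    show "(?d n has_real_derivative - (lam * ?f n t)) (at t within edge x n)"
      by (rule DERIV_cong[OF DERIV_cmult[OF D(1)]]) (use lam in simp)
  qed
  show "\<forall>v\<in>B. \<forall>j\<in>v. endval ?f x j = 0"
  proof (intro ballI)
    fix v j assume v: "v \<in> B" and j: "j \<in> v"
    have jE: "j < 2*E" using mg_facts(3)[OF mg _ j] v BV by blast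
    show "endval ?f x j = 0" using endval_sg[OF mg V1 bip jE, of ?h] hd b v j by simp
  qed
  show "\<forall>v\<in>Vs - B. standard_cond v (endval ?f x) (endder ?d x)"
  proof
    fix v assume v: "v \<in> Vs - B"
    have jE: "j < 2*E" if "j \<in> v" for j using mg_facts(3)[OF mg _ that] v by blast
    obtain j0 where j0: "j0 \<in> v" using mg_facts(7)[OF mg] v by blast
    have eqv: "\<forall>i\<in>v. \<forall>j\<in>v. endder e x i = endder e x j"
      using s v unfolding antistandard_cond_def by blast
    have sd: "(\<Sum>j\<in>v. endval g x j) = 0" using s v unfolding antistandard_cond_def by blast
    have "(\<Sum>j\<in>v. endder ?d x j) = (\<Sum>j\<in>v. rho V1 j0 * endval g x j)"
    proof (rule sum.cong[OF refl])
      fix j assume j: "j \<in> v"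
      show "endder ?d x j = rho V1 j0 * endval g x j"
        using endder_sg[OF mg V1 bip jE[OF j], of g] rho_const[OF mg V1 _ j j0] v by simp
    qed
    also have "\<dots> = 0" using sd by (simp add: sum_distrib_left[symmetric])
    finally have S1: "(\<Sum>j\<in>v. endder ?d x j) = 0" .
    have S2: "endval ?f x i = endval ?f x j" if i: "i \<in> v" and j: "j \<in> v" for i j
    proof -
      have "endval ?f x i = rho V1 i * (endder e x i / (- lam))"
        using endval_sg[OF mg V1 bip jE[OF i], of ?h] hd by simp
      also have "\<dots> = rho V1 j * (endder e x j / (- lam))"
      proof -
        have "endder e x i = endder e x j" using eqv i j by blast
        moreover have "rho V1 i = rho V1 j" using rho_const[OF mg V1 _ i j] v by blast
        ultimately show ?thesis by simp
      qed
      also have "\<dots> = endval ?f x j"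
        using endval_sg[OF mg V1 bip jE[OF j], of ?h] hd by simp
      finally show ?thesis .
    qed
    show "standard_cond v (endval ?f x) (endder ?d x)"
      unfolding standard_cond_def using S1 S2 by blast
  qed
qed

definition Mset where
  "Mset E x P lam = {m. \<exists>phi. (\<forall>i<m. P lam (phi i)) \<and> lin_indep E x m phi}"

lemma mult_Mset: "multiplicity E x P lam = Sup (Mset E x P lam)"
  unfolding multiplicity_def Mset_def ..

lemma M_st_to_a:
  assumes mg: "metric_graph E x Vs" and V1: "V1 \<subseteq> Vs"
    and bip: "\<forall>n<E. \<forall>v\<in>Vs. \<forall>w\<in>Vs. 2*n \<in> v \<longrightarrow> 2*n+1 \<in> w \<longrightarrow> (v \<in> V1 \<longleftrightarrow> w \<notin> V1)"
    and BV: "B \<subseteq> Vs" and lam: "lam \<noteq> 0"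
  shows "Mset E x (eigfun_stD E x Vs B) lam \<subseteq> Mset E x (eigfun_astN E x Vs B) lam"
proof
  fix m assume "m \<in> Mset E x (eigfun_stD E x Vs B) lam"
  then obtain phi where ph: "\<forall>i<m. eigfun_stD E x Vs B lam (phi i)" and li: "lin_indep E x m phi"
    unfolding Mset_def by blast
  define dd where "dd i = (SOME d. solves_edges E x lam (phi i) d \<and> (\<forall>v\<in>B. \<forall>j\<in>v. endval (phi i) x j = 0) \<and>
      (\<forall>v\<in>Vs - B. standard_cond v (endval (phi i) x) (endder d x)))" for i
  have ddp: "solves_edges E x lam (phi i) (dd i) \<and> (\<forall>v\<in>B. \<forall>j\<in>v. endval (phi i) x j = 0) \<and>
      (\<forall>v\<in>Vs - B. standard_cond v (endval (phi i) x) (endder (dd i) x))" if "i < m" for i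
  proof -
    have "\<exists>d. solves_edges E x lam (phi i) d \<and> (\<forall>v\<in>B. \<forall>j\<in>v. endval (phi i) x j = 0) \<and>
      (\<forall>v\<in>Vs - B. standard_cond v (endval (phi i) x) (endder d x))"
      using ph that unfolding eigfun_stD_def by blast
    then show ?thesis unfolding dd_def by (rule someI_ex)
  qed
  define psi where "psi i = (\<lambda>n t. sg V1 n * dd i n t)" for i
  have "\<forall>i<m. eigfun_astN E x Vs B lam (psi i)"
  proof (intro allI impI)
    fix i assume i: "i < m"
    show "eigfun_astN E x Vs B lam (psi i)" unfolding psi_def
      using T_eig[OF mg V1 bip BV, of lam "phi i" "dd i"] ddp[OF i] by blast
  qed
  moreover have "lin_indep E x m psi"
    unfolding lin_indep_def
  proof (rule allI, rule impI)
    fix c assume H: "\<forall>n<E. \<forall>t\<in>edge x n. (\<Sum>i<m. c i * psi i n t) = 0"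
    have "\<forall>n<E. \<forall>t\<in>edge x n. (\<Sum>i<m. c i * phi i n t) = 0"
    proof (intro allI impI ballI)
      fix n t assume n: "n < E" and t: "t \<in> edge x n"
      have z: "\<forall>s\<in>edge x n. (\<Sum>i<m. c i * dd i n s) = 0"
      proof
        fix s assume s: "s \<in> edge x n"
        have "sg V1 n * (\<Sum>i<m. c i * dd i n s) = (\<Sum>i<m. c i * psi i n s)"
          unfolding psi_def by (simp add: sum_distrib_left algebra_simps)
        also have "\<dots> = 0" using H n s by blast
        finally show "(\<Sum>i<m. c i * dd i n s) = 0" using sg_nz[of V1 n] by simp
      qed
      have se: "\<forall>i<m. solves_edges E x lam (phi i) (dd i)" using ddp by blast
      show "(\<Sum>i<m. c i * phi i n t) = 0" by (rule comb_zero[OF mg se lam n z t])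
    qed
    then show "\<forall>i<m. c i = 0" using li unfolding lin_indep_def by blast
  qed
  ultimately show "m \<in> Mset E x (eigfun_astN E x Vs B) lam" unfolding Mset_def by blast
qed

lemma M_a_to_st:
  assumes mg: "metric_graph E x Vs" and V1: "V1 \<subseteq> Vs"
    and bip: "\<forall>n<E. \<forall>v\<in>Vs. \<forall>w\<in>Vs. 2*n \<in> v \<longrightarrow> 2*n+1 \<in> w \<longrightarrow> (v \<in> V1 \<longleftrightarrow> w \<notin> V1)"
    and BV: "B \<subseteq> Vs" and lam: "lam \<noteq> 0"
  shows "Mset E x (eigfun_astN E x Vs B) lam \<subseteq> Mset E x (eigfun_stD E x Vs B) lam"
proof
  fix m assume "m \<in> Mset E x (eigfun_astN E x Vs B) lam"
  then obtain phi where ph: "\<forall>i<m. eigfun_astN E x Vs B lam (phi i)" and li: "lin_indep E x m phi"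
    unfolding Mset_def by blast
  define dd where "dd i = (SOME d. solves_edges E x lam (phi i) d \<and> (\<forall>v\<in>B. \<forall>j\<in>v. endder d x j = 0) \<and>
      (\<forall>v\<in>Vs - B. antistandard_cond v (endval (phi i) x) (endder d x)))" for i
  have ddp: "solves_edges E x lam (phi i) (dd i) \<and> (\<forall>v\<in>B. \<forall>j\<in>v. endder (dd i) x j = 0) \<and>
      (\<forall>v\<in>Vs - B. antistandard_cond v (endval (phi i) x) (endder (dd i) x))" if "i < m" for i
  proof -
    have "\<exists>d. solves_edges E x lam (phi i) d \<and> (\<forall>v\<in>B. \<forall>j\<in>v. endder d x j = 0) \<and>
      (\<forall>v\<in>Vs - B. antistandard_cond v (endval (phi i) x) (endder d x))"
      using ph that unfolding eigfun_astN_def by blast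
    then show ?thesis unfolding dd_def by (rule someI_ex)
  qed
  define psi where "psi i = (\<lambda>n t. sg V1 n * (dd i n t / (- lam)))" for i
  have "\<forall>i<m. eigfun_stD E x Vs B lam (psi i)"
  proof (intro allI impI)
    fix i assume i: "i < m"
    show "eigfun_stD E x Vs B lam (psi i)" unfolding psi_def
      using S_eig[OF mg V1 bip BV lam, of "phi i" "dd i"] ddp[OF i] by blast
  qed
  moreover have "lin_indep E x m psi"
    unfolding lin_indep_def
  proof (rule allI, rule impI)
    fix c assume H: "\<forall>n<E. \<forall>t\<in>edge x n. (\<Sum>i<m. c i * psi i n t) = 0"
    have "\<forall>n<E. \<forall>t\<in>edge x n. (\<Sum>i<m. c i * phi i n t) = 0"
    proof (intro allI impI ballI)
      fix n t assume n: "n < E" and t: "t \<in> edge x n"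
      have z: "\<forall>s\<in>edge x n. (\<Sum>i<m. c i * dd i n s) = 0"
      proof
        fix s assume s: "s \<in> edge x n"
        have "(sg V1 n / (- lam)) * (\<Sum>i<m. c i * dd i n s) = (\<Sum>i<m. c i * psi i n s)"
          unfolding psi_def by (simp add: sum_distrib_left algebra_simps)
        also have "\<dots> = 0" using H n s by blast
        finally show "(\<Sum>i<m. c i * dd i n s) = 0" using sg_nz[of V1 n] lam by simp
      qed
      have se: "\<forall>i<m. solves_edges E x lam (phi i) (dd i)" using ddp by blast
      show "(\<Sum>i<m. c i * phi i n t) = 0" by (rule comb_zero[OF mg se lam n z t])
    qed
    then show "\<forall>i<m. c i = 0" using li unfolding lin_indep_def by blast
  qed
  ultimately show "m \<in> Mset E x (eigfun_stD E x Vs B) lam" unfolding Mset_def by blast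
qed

lemma mult_zero:
  assumes "\<forall>f. P lam f \<longrightarrow> (\<forall>n<E. \<forall>t\<in>edge x n. f n t = 0)"
  shows "multiplicity E x P lam = 0"
proof -
  have "Mset E x P lam = {0}"
  proof (intro equalityI subsetI)
    fix m assume "m \<in> Mset E x P lam"
    then obtain phi where ph: "\<forall>i<m. P lam (phi i)" and li: "lin_indep E x m phi"
      unfolding Mset_def by blast
    have "\<forall>n<E. \<forall>t\<in>edge x n. (\<Sum>i<m. (\<lambda>_. 1::real) i * phi i n t) = 0"
    proof (intro allI impI ballI)
      fix n t assume n: "n < E" and t: "t \<in> edge x n"
      have "\<forall>i<m. phi i n t = 0"
        using assms[rule_format, OF ph[rule_format] n t] by blast
      then show "(\<Sum>i<m. (\<lambda>_. 1::real) i * phi i n t) = 0" by simp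
    qed
    moreover have "(\<forall>n<E. \<forall>t\<in>edge x n. (\<Sum>i<m. (\<lambda>_. 1::real) i * phi i n t) = 0) \<longrightarrow>
        (\<forall>i<m. (\<lambda>_. 1::real) i = 0)"
      using li unfolding lin_indep_def by (rule spec)
    ultimately have "\<forall>i<m. (\<lambda>_. 1::real) i = 0" by (rule rev_mp)
    then show "m \<in> {0}" by auto
  next
    fix m assume "m \<in> {0::nat}"
    then have "m = 0" by simp
    then show "m \<in> Mset E x P lam" unfolding Mset_def lin_indep_def by simp
  qed
  then show ?thesis by (simp add: mult_Mset)
qed

interpretation fv: vector_space "\<lambda>(c::real) (f::nat\<Rightarrow>real). (\<lambda>n. c * f n)"
  by unfold_locales (auto simp: algebra_simps fun_eq_iff)

definition Lsum :: "(nat \<Rightarrow> real) \<Rightarrow> nat set \<Rightarrow> real" where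
  "Lsum a v = (\<Sum>j\<in>v. a (j div 2))"

definition Wsp :: "nat \<Rightarrow> (nat \<Rightarrow> real) set" where
  "Wsp E = {a. \<forall>n\<ge>E. a n = 0}"

definition Ksp :: "nat \<Rightarrow> nat set set \<Rightarrow> nat set set \<Rightarrow> (nat \<Rightarrow> real) set" where
  "Ksp E Vs B = {a. a \<in> Wsp E \<and> (\<forall>v\<in>Vs - B. Lsum a v = 0)}"

definition indep_idx :: "nat \<Rightarrow> nat \<Rightarrow> (nat \<Rightarrow> nat \<Rightarrow> real) \<Rightarrow> bool" where
  "indep_idx E m a \<longleftrightarrow> (\<forall>c. (\<forall>n<E. (\<Sum>i<m. c i * a i n) = 0) \<longrightarrow> (\<forall>i<m. c i = 0))"

definition delta :: "nat \<Rightarrow> nat \<Rightarrow> real" where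
  "delta n = (\<lambda>i. if i = n then 1 else 0)"

lemma sum_fun_apply: "(\<Sum>y\<in>A. g y) n = (\<Sum>y\<in>A. (g y n::real))"
proof (cases "finite A")
  case True then show ?thesis by (induction A rule: finite_induct) (simp_all add: func_zero func_plus)
next
  case False then show ?thesis by (simp add: func_zero)
qed

lemma sum_split_add: "(\<Sum>i<m+(p::nat). (g i::real)) = (\<Sum>i<m. g i) + (\<Sum>k<p. g (m+k))"
  by (induction p) (simp_all add: sum.lessThan_Suc)

lemma delta_W: "n < E \<Longrightarrow> delta n \<in> Wsp E"
  unfolding delta_def Wsp_def by simp

lemma W_in_span:
  assumes "a \<in> Wsp E"
  shows "a \<in> fv.span (delta ` {..<E})"
proof -
  have eq: "a = (\<Sum>n<E. (\<lambda>k. a n * delta n k))"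
  proof
    fix k
    show "a k = (\<Sum>n<E. (\<lambda>k. a n * delta n k)) k"
    proof (cases "k < E")
      case True
      have "(\<Sum>n<E. (\<lambda>k. a n * delta n k)) k = (\<Sum>n<E. a n * delta n k)" by (rule sum_fun_apply)
      also have "\<dots> = (\<Sum>n<E. if n = k then a k else 0)"
        by (rule sum.cong) (auto simp: delta_def)
      also have "\<dots> = a k" using True by simp
      finally show ?thesis by simp
    next
      case False
      have "(\<Sum>n<E. (\<lambda>k. a n * delta n k)) k = (\<Sum>n<E. a n * delta n k)" by (rule sum_fun_apply)
      also have "\<dots> = 0" using False by (intro sum.neutral) (auto simp: delta_def)
      also have "\<dots> = a k" using False assms unfolding Wsp_def by simp
      finally show ?thesis by simp
    qed
  qed
  have "(\<Sum>n<E. (\<lambda>k. a n * delta n k)) \<in> fv.span (delta ` {..<E})"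
    by (intro fv.span_sum fv.span_scale fv.span_base) auto
  then show ?thesis using eq by simp
qed

lemma indep_idx_inj:
  assumes ind: "indep_idx E m a"
  shows "inj_on a {..<m}"
proof (rule inj_onI, rule ccontr)
  fix i j assume i: "i \<in> {..<m}" and j: "j \<in> {..<m}" and eq: "a i = a j" and ne: "i \<noteq> j"
  define c where "c k = (if k = i then 1 else if k = j then -1 else (0::real))" for k
  have "(\<Sum>k<m. c k * a k n) = 0" if "n < E" for n
  proof -
    have "(\<Sum>k<m. c k * a k n) = (\<Sum>k<m. (if k = i then a i n else 0) - (if k = j then a j n else 0))"
      by (rule sum.cong) (auto simp: c_def ne)
    also have "\<dots> = 0" using i j eq by (simp add: sum_subtractf)
    finally show ?thesis .
  qed
  then have "c i = 0" using ind i unfolding indep_idx_def by blast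
  then show False unfolding c_def by simp
qed

lemma fam_indep:
  assumes ind: "indep_idx E m a" and W: "\<forall>i<m. a i \<in> Wsp E"
  shows "fv.independent (a ` {..<m})"
proof (rule fv.independent_if_scalars_zero)
  show "finite (a ` {..<m})" by simp
  fix f y assume S: "(\<Sum>x\<in>a ` {..<m}. (\<lambda>n. f x * x n)) = 0" and y: "y \<in> a ` {..<m}"
  have inj: "inj_on a {..<m}" by (rule indep_idx_inj[OF ind])
  have "(\<Sum>i<m. f (a i) * a i n) = 0" for n
  proof -
    have "(\<Sum>i<m. f (a i) * a i n) = (\<Sum>x\<in>a ` {..<m}. f x * x n)"
      by (simp add: sum.reindex[OF inj])
    also have "\<dots> = (\<Sum>x\<in>a ` {..<m}. (\<lambda>n. f x * x n)) n" by (simp add: sum_fun_apply)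
    also have "\<dots> = 0" using S by (simp add: func_zero)
    finally show ?thesis .
  qed
  moreover have "(\<forall>n<E. (\<Sum>i<m. (\<lambda>i. f (a i)) i * a i n) = 0) \<longrightarrow> (\<forall>i<m. (\<lambda>i. f (a i)) i = 0)"
    using ind unfolding indep_idx_def by (rule spec)
  ultimately have "\<forall>i<m. f (a i) = 0" by simp
  then show "f y = 0" using y by auto
qed

lemma fam_bound:
  assumes ind: "indep_idx E m a" and W: "\<forall>i<m. a i \<in> Wsp E"
  shows "m \<le> E"
proof -
  have sub: "a ` {..<m} \<subseteq> fv.span (delta ` {..<E})" using W W_in_span by blast
  have "card (a ` {..<m}) \<le> card (delta ` {..<E})"
    using fv.independent_span_bound[OF _ fam_indep[OF ind W] sub] by simp
  also have "\<dots> \<le> E" using card_image_le[of "{..<E}" delta] by simp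
  finally show ?thesis using card_image[OF indep_idx_inj[OF ind]] by simp
qed

lemma Lsum_lin:
  assumes "finite I"
  shows "Lsum (\<lambda>k. \<Sum>i\<in>I. c i * b i k) u = (\<Sum>i\<in>I. c i * Lsum (b i) u)"
  unfolding Lsum_def by (simp add: sum_distrib_left sum.swap[of _ u])

lemma Lsum_delta:
  assumes fu: "finite u"
  shows "Lsum (delta n) u = (if 2*n \<in> u then 1 else 0) + (if 2*n+1 \<in> u then 1 else 0)"
proof -
  have "Lsum (delta n) u = (\<Sum>j\<in>u. (if j = 2*n then 1 else 0) + (if j = 2*n+1 then 1 else (0::real)))"
    unfolding Lsum_def delta_def by (rule sum.cong) auto
  also have "\<dots> = (if 2*n \<in> u then 1 else 0) + (if 2*n+1 \<in> u then 1 else 0)"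
    using fu by (simp add: sum.distrib)
  finally show ?thesis .
qed

lemma no_loop:
  assumes "bipartite E Vs" "metric_graph E x Vs"
  shows "\<forall>n<E. \<forall>v\<in>Vs. \<not> (2*n \<in> v \<and> 2*n+1 \<in> v)"
  using assms(1) unfolding bipartite_def by blast

lemma walk_vec:
  assumes mg: "metric_graph E x Vs" and nl: "\<forall>n<E. \<forall>v\<in>Vs. \<not> (2*n \<in> v \<and> 2*n+1 \<in> v)"
    and r: "(v, b) \<in> (edge_rel E Vs)\<^sup>*"
  shows "\<exists>a\<in>Wsp E. \<forall>u\<in>Vs. u \<noteq> b \<longrightarrow> Lsum a u = (if u = v then 1 else 0)"
  using r
proof (induction rule: rtrancl_induct)
  case base
  show ?case by (rule bexI[of _ "\<lambda>_. 0"]) (auto simp: Lsum_def Wsp_def)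
next
  case (step w z)
  from step.IH obtain a where aW: "a \<in> Wsp E" and aL: "\<forall>u\<in>Vs. u \<noteq> w \<longrightarrow> Lsum a u = (if u = v then 1 else 0)"
    by blast
  from step.hyps(2) obtain n where w: "w \<in> Vs" and z: "z \<in> Vs" and n: "n < E"
    and e: "(2*n \<in> w \<and> 2*n+1 \<in> z) \<or> (2*n+1 \<in> w \<and> 2*n \<in> z)"
    unfolding edge_rel_def by blast
  have wz: "w \<noteq> z" using nl n w e by blast
  have Dw: "Lsum (delta n) w = 1"
  proof -
    have "\<not> (2*n \<in> w \<and> 2*n+1 \<in> w)" using nl n w by blast
    then show ?thesis using Lsum_delta[OF mg_facts(2)[OF mg w], of n] e by auto
  qed
  have Du: "Lsum (delta n) u = 0" if u: "u \<in> Vs" "u \<noteq> w" "u \<noteq> z" for u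
  proof -
    have "2*n \<notin> u"
    proof
      assume "2*n \<in> u"
      then show False using e mg_facts(5)[OF mg u(1) w] mg_facts(5)[OF mg u(1) z] u by blast
    qed
    moreover have "2*n+1 \<notin> u"
    proof
      assume "2*n+1 \<in> u"
      then show False using e mg_facts(5)[OF mg u(1) w] mg_facts(5)[OF mg u(1) z] u by blast
    qed
    ultimately show ?thesis using Lsum_delta[OF mg_facts(2)[OF mg u(1)], of n] by simp
  qed
  define c where "c = (if w = v then 1 else 0) - Lsum a w"
  define a' where "a' = (\<lambda>k. a k + c * delta n k)"
  have La': "Lsum a' u = Lsum a u + c * Lsum (delta n) u" for u
    unfolding a'_def Lsum_def by (simp add: sum.distrib sum_distrib_left)
  have "a' \<in> Wsp E" using aW n unfolding a'_def Wsp_def delta_def by auto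
  moreover have "\<forall>u\<in>Vs. u \<noteq> z \<longrightarrow> Lsum a' u = (if u = v then 1 else 0)"
  proof (intro ballI impI)
    fix u assume u: "u \<in> Vs" "u \<noteq> z"
    show "Lsum a' u = (if u = v then 1 else 0)"
    proof (cases "u = w")
      case True then show ?thesis using La'[of u] Dw unfolding c_def by simp
    next
      case False then show ?thesis using La'[of u] Du[OF u(1) False u(2)] aL u(1) by simp
    qed
  qed
  ultimately show ?case by blast
qed

lemma sv_exists:
  assumes mg: "metric_graph E x Vs" and conn: "graph_connected E Vs"
    and nl: "\<forall>n<E. \<forall>v\<in>Vs. \<not> (2*n \<in> v \<and> 2*n+1 \<in> v)"
    and BV: "B \<subseteq> Vs" and Bne: "B \<noteq> {}"
  shows "\<exists>s. \<forall>v\<in>Vs-B. s v \<in> Wsp E \<and> (\<forall>u\<in>Vs-B. Lsum (s v) u = (if u = v then 1 else 0))"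
proof -
  obtain b where b: "b \<in> B" using Bne by blast
  have "\<forall>v\<in>Vs-B. \<exists>a. a \<in> Wsp E \<and> (\<forall>u\<in>Vs-B. Lsum a u = (if u = v then 1 else 0))"
  proof
    fix v assume v: "v \<in> Vs - B"
    have "(v, b) \<in> (edge_rel E Vs)\<^sup>*" using conn v b BV unfolding graph_connected_def by blast
    from walk_vec[OF mg nl this] obtain a where a: "a \<in> Wsp E"
      and aL: "\<forall>u\<in>Vs. u \<noteq> b \<longrightarrow> Lsum a u = (if u = v then 1 else 0)" by blast
    have "\<forall>u\<in>Vs-B. Lsum a u = (if u = v then 1 else 0)"
    proof
      fix u assume u: "u \<in> Vs - B"
      then have "u \<noteq> b" using b by blast
      then show "Lsum a u = (if u = v then 1 else 0)" using aL u by blast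
    qed
    then show "\<exists>a. a \<in> Wsp E \<and> (\<forall>u\<in>Vs-B. Lsum a u = (if u = v then 1 else 0))" using a by blast
  qed
  then show ?thesis by (rule bchoice)
qed

lemma upper:
  assumes mg: "metric_graph E x Vs" and conn: "graph_connected E Vs"
    and nl: "\<forall>n<E. \<forall>v\<in>Vs. \<not> (2*n \<in> v \<and> 2*n+1 \<in> v)"
    and BV: "B \<subseteq> Vs" and Bne: "B \<noteq> {}"
    and Kf: "\<forall>i<m. a i \<in> Ksp E Vs B" and ind: "indep_idx E m a"
  shows "m + card (Vs - B) \<le> E"
proof -
  obtain s where s: "\<forall>v\<in>Vs-B. s v \<in> Wsp E \<and> (\<forall>u\<in>Vs-B. Lsum (s v) u = (if u = v then 1 else 0))"
    using sv_exists[OF mg conn nl BV Bne] by blast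
  define p where "p = card (Vs - B)"
  have fin: "finite (Vs - B)" using mg_facts(1)[OF mg] by simp
  obtain h where h: "bij_betw h {0..<p} (Vs - B)" using ex_bij_betw_nat_finite[OF fin] unfolding p_def by blast
  have hin: "h k \<in> Vs - B" if "k < p" for k using h that by (auto dest: bij_betwE)
  have hinj: "inj_on h {0..<p}" using h by (simp add: bij_betw_def)
  define b where "b i = (if i < m then a i else s (h (i - m)))" for i
  have bW: "\<forall>i<m+p. b i \<in> Wsp E"
  proof (intro allI impI)
    fix i assume i: "i < m + p"
    show "b i \<in> Wsp E"
    proof (cases "i < m")
      case True then show ?thesis using Kf unfolding b_def Ksp_def by simp
    next
      case False
      then have "h (i - m) \<in> Vs - B" using hin i by simp
      then show ?thesis using s False unfolding b_def by simp
    qed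
  qed
  have "indep_idx E (m+p) b"
    unfolding indep_idx_def
  proof (rule allI, rule impI)
    fix c assume H: "\<forall>n<E. (\<Sum>i<m+p. c i * b i n) = 0"
    have hk: "c (m+k) = 0" if k: "k < p" for k
    proof -
      have u: "h k \<in> Vs - B" by (rule hin[OF k])
      have "Lsum (\<lambda>n. \<Sum>i<m+p. c i * b i n) (h k) = 0"
        unfolding Lsum_def
      proof (rule sum.neutral, rule ballI)
        fix j assume j: "j \<in> h k"
        have "j < 2*E" using mg_facts(3)[OF mg _ j] u by blast
        then have "j div 2 < E" by simp
        then show "(\<Sum>i<m+p. c i * b i (j div 2)) = 0" using H by blast
      qed
      moreover have "Lsum (\<lambda>n. \<Sum>i<m+p. c i * b i n) (h k) = (\<Sum>i<m+p. c i * Lsum (b i) (h k))"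
        by (rule Lsum_lin) simp
      moreover have "(\<Sum>i<m+p. c i * Lsum (b i) (h k)) =
          (\<Sum>i<m. c i * Lsum (b i) (h k)) + (\<Sum>k'<p. c (m+k') * Lsum (b (m+k')) (h k))"
        by (rule sum_split_add)
      moreover have "(\<Sum>i<m. c i * Lsum (b i) (h k)) = 0"
      proof (rule sum.neutral, rule ballI)
        fix i assume i: "i \<in> {..<m}"
        then have "Lsum (a i) (h k) = 0" using Kf u unfolding Ksp_def by auto
        then show "c i * Lsum (b i) (h k) = 0" using i unfolding b_def by simp
      qed
      moreover have "(\<Sum>k'<p. c (m+k') * Lsum (b (m+k')) (h k)) = (\<Sum>k'<p. if k' = k then c (m+k) else 0)"
      proof (rule sum.cong[OF refl])
        fix k' assume k': "k' \<in> {..<p}"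
        have hk': "h k' \<in> Vs - B" using hin k' by simp
        have "Lsum (b (m+k')) (h k) = Lsum (s (h k')) (h k)" unfolding b_def by simp
        also have "\<dots> = (if h k = h k' then 1 else 0)" using s hk' u by blast
        also have "\<dots> = (if k' = k then 1 else 0)"
          using hinj k k' unfolding inj_on_def by auto
        finally show "c (m+k') * Lsum (b (m+k')) (h k) = (if k' = k then c (m+k) else 0)" by simp
      qed
      moreover have "(\<Sum>k'<p. if k' = k then c (m+k) else 0) = c (m+k)" using k by simp
      ultimately show ?thesis by simp
    qed
    have "\<forall>n<E. (\<Sum>i<m. c i * a i n) = 0"
    proof (intro allI impI)
      fix n assume n: "n < E"
      have "(\<Sum>i<m+p. c i * b i n) = (\<Sum>i<m. c i * b i n) + (\<Sum>k<p. c (m+k) * b (m+k) n)"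
        by (rule sum_split_add)
      moreover have "(\<Sum>k<p. c (m+k) * b (m+k) n) = 0" using hk by simp
      moreover have "(\<Sum>i<m. c i * b i n) = (\<Sum>i<m. c i * a i n)" unfolding b_def by simp
      ultimately show "(\<Sum>i<m. c i * a i n) = 0" using H n by simp
    qed
    then have cm: "\<forall>i<m. c i = 0" using ind unfolding indep_idx_def by blast
    show "\<forall>i<m+p. c i = 0"
    proof (intro allI impI)
      fix i assume i: "i < m + p"
      show "c i = 0"
      proof (cases "i < m")
        case True then show ?thesis using cm by simp
      next
        case False
        then have "i = m + (i - m)" "i - m < p" using i by auto
        then show ?thesis using hk by metis
      qed
    qed
  qed
  from fam_bound[OF this bW] show ?thesis by (simp add: p_def)
qed

lemma lower:
  assumes mg: "metric_graph E x Vs" and conn: "graph_connected E Vs"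
    and nl: "\<forall>n<E. \<forall>v\<in>Vs. \<not> (2*n \<in> v \<and> 2*n+1 \<in> v)"
    and BV: "B \<subseteq> Vs" and Bne: "B \<noteq> {}"
  shows "\<exists>q a. (\<forall>i<q. a i \<in> Ksp E Vs B) \<and> indep_idx E q a \<and> E \<le> q + card (Vs - B)"
proof -
  obtain s where s: "\<forall>v\<in>Vs-B. s v \<in> Wsp E \<and> (\<forall>u\<in>Vs-B. Lsum (s v) u = (if u = v then 1 else 0))"
    using sv_exists[OF mg conn nl BV Bne] by blast
  have fin: "finite (Vs - B)" using mg_facts(1)[OF mg] by simp
  obtain Bk where Bk: "Bk \<subseteq> Ksp E Vs B" "fv.independent Bk" "Ksp E Vs B \<subseteq> fv.span Bk"
    by (rule fv.basis_exists)
  have KW: "Ksp E Vs B \<subseteq> fv.span (delta ` {..<E})" using W_in_span unfolding Ksp_def by blast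
  have finBk: "finite Bk"
    using fv.independent_span_bound[of "delta ` {..<E}" Bk] Bk(1,2) KW by auto
  let ?S = "s ` (Vs - B)"
  have T: "delta ` {..<E} \<subseteq> fv.span (Bk \<union> ?S)"
  proof
    fix y assume "y \<in> delta ` {..<E}"
    then obtain n where n: "n < E" and y: "y = delta n" by blast
    define k where "k = (\<lambda>i. delta n i - (\<Sum>v\<in>Vs-B. Lsum (delta n) v * s v i))"
    have kW: "k \<in> Wsp E"
      unfolding Wsp_def
    proof (intro CollectI allI impI)
      fix i assume i: "E \<le> i"
      have "delta n i = 0" using n i unfolding delta_def by simp
      moreover have "(\<Sum>v\<in>Vs-B. Lsum (delta n) v * s v i) = 0"
      proof (rule sum.neutral, rule ballI)
        fix v assume "v \<in> Vs - B"
        then have "s v i = 0" using s i unfolding Wsp_def by blast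
        then show "Lsum (delta n) v * s v i = 0" by simp
      qed
      ultimately show "k i = 0" unfolding k_def by simp
    qed
    have kL: "Lsum k u = 0" if u: "u \<in> Vs - B" for u
    proof -
      have "Lsum k u = Lsum (delta n) u - Lsum (\<lambda>i. \<Sum>v\<in>Vs-B. Lsum (delta n) v * s v i) u"
        unfolding k_def Lsum_def by (simp add: sum_subtractf)
      also have "Lsum (\<lambda>i. \<Sum>v\<in>Vs-B. Lsum (delta n) v * s v i) u = (\<Sum>v\<in>Vs-B. Lsum (delta n) v * Lsum (s v) u)"
        by (rule Lsum_lin[OF fin])
      also have "\<dots> = (\<Sum>v\<in>Vs-B. if v = u then Lsum (delta n) u else 0)"
      proof (rule sum.cong[OF refl])
        fix v assume v: "v \<in> Vs - B"
        have "Lsum (s v) u = (if u = v then 1 else 0)" using s v u by blast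
        then show "Lsum (delta n) v * Lsum (s v) u = (if v = u then Lsum (delta n) u else 0)" by auto
      qed
      also have "\<dots> = Lsum (delta n) u" using u fin by simp
      finally show ?thesis by simp
    qed
    have kK: "k \<in> Ksp E Vs B" unfolding Ksp_def using kW kL by blast
    have eq: "delta n = k + (\<Sum>v\<in>Vs-B. (\<lambda>i. Lsum (delta n) v * s v i))"
    proof
      fix i
      show "delta n i = (k + (\<Sum>v\<in>Vs-B. (\<lambda>i. Lsum (delta n) v * s v i))) i"
        unfolding func_plus k_def by (simp add: sum_fun_apply)
    qed
    have "k \<in> fv.span (Bk \<union> ?S)" using kK Bk(3) fv.span_mono[of Bk "Bk \<union> ?S"] by blast
    moreover have "(\<Sum>v\<in>Vs-B. (\<lambda>i. Lsum (delta n) v * s v i)) \<in> fv.span (Bk \<union> ?S)"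
    proof (rule fv.span_sum)
      fix v assume v: "v \<in> Vs - B"
      have "s v \<in> fv.span (Bk \<union> ?S)" using v by (intro fv.span_base) blast
      then show "(\<lambda>i. Lsum (delta n) v * s v i) \<in> fv.span (Bk \<union> ?S)" by (rule fv.span_scale)
    qed
    ultimately have "k + (\<Sum>v\<in>Vs-B. (\<lambda>i. Lsum (delta n) v * s v i)) \<in> fv.span (Bk \<union> ?S)"
      by (rule fv.span_add)
    then show "y \<in> fv.span (Bk \<union> ?S)" unfolding y eq[symmetric] .
  qed
  have indD: "indep_idx E E delta"
    unfolding indep_idx_def
  proof (rule allI, rule impI)
    fix c assume H: "\<forall>n<E. (\<Sum>i<E. c i * delta i n) = 0"
    show "\<forall>i<E. c i = 0"
    proof (intro allI impI)
      fix i assume i: "i < E"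
      have "(\<Sum>j<E. c j * delta j i) = (\<Sum>j<E. if j = i then c i else 0)"
        by (rule sum.cong) (auto simp: delta_def)
      also have "\<dots> = c i" using i by simp
      finally show "c i = 0" using H i by simp
    qed
  qed
  have indT: "fv.independent (delta ` {..<E})"
    by (rule fam_indep[OF indD]) (simp add: delta_W)
  have cT: "card (delta ` {..<E}) = E" using card_image[OF indep_idx_inj[OF indD]] by simp
  have "card (delta ` {..<E}) \<le> card (Bk \<union> ?S)"
    using fv.independent_span_bound[OF _ indT T] finBk fin by simp
  also have "\<dots> \<le> card Bk + card ?S" by (rule card_Un_le)
  also have "card ?S \<le> card (Vs - B)" by (rule card_image_le[OF fin])
  finally have Ebound: "E \<le> card Bk + card (Vs - B)" using cT by simp
  obtain g where g: "bij_betw g {0..<card Bk} Bk" using ex_bij_betw_nat_finite[OF finBk] by blast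
  define q where "q = card Bk"
  have gin: "g i \<in> Bk" if "i < q" for i using g that unfolding q_def by (auto dest: bij_betwE)
  have ginj: "inj_on g {..<q}" using g unfolding q_def bij_betw_def by (simp add: atLeast0LessThan)
  have gimg: "g ` {..<q} = Bk" using g unfolding q_def bij_betw_def by (simp add: atLeast0LessThan)
  have gK: "\<forall>i<q. g i \<in> Ksp E Vs B" using gin Bk(1) by blast
  have "indep_idx E q g"
    unfolding indep_idx_def
  proof (rule allI, rule impI)
    fix c assume H: "\<forall>n<E. (\<Sum>i<q. c i * g i n) = 0"
    define u where "u y = c (the_inv_into {..<q} g y)" for y
    have ug: "u (g i) = c i" if "i < q" for i
      unfolding u_def using the_inv_into_f_f[OF ginj] that by simp
    have Z: "(\<Sum>y\<in>Bk. (\<lambda>n. u y * y n)) = 0"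
    proof
      fix n
      have "(\<Sum>y\<in>Bk. (\<lambda>n. u y * y n)) n = (\<Sum>y\<in>Bk. u y * y n)" by (rule sum_fun_apply)
      also have "\<dots> = (\<Sum>i<q. u (g i) * g i n)"
        unfolding gimg[symmetric] by (rule sum.reindex[OF ginj, unfolded o_def])
      also have "\<dots> = (\<Sum>i<q. c i * g i n)" by (rule sum.cong) (auto simp: ug)
      also have "\<dots> = 0"
      proof (cases "n < E")
        case True then show ?thesis using H by blast
      next
        case False
        have "g i n = 0" if "i < q" for i using gK that False unfolding Ksp_def Wsp_def by auto
        then show ?thesis by simp
      qed
      finally show "(\<Sum>y\<in>Bk. (\<lambda>n. u y * y n)) n = 0 n" by (simp add: func_zero)
    qed
    have "\<forall>v\<in>Bk. u v = 0" using Bk(2) fv.dependent_finite[OF finBk] Z by blast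
    then show "\<forall>i<q. c i = 0" using ug gin by metis
  qed
  then show ?thesis using gK Ebound unfolding q_def by blast
qed

lemma endpoint_in_edge:
  assumes mg: "metric_graph E x Vs" and j: "j < 2*E"
  shows "x j \<in> edge x (j div 2)"
proof -
  have n: "j div 2 < E" using j by simp
  have lt: "x (2*(j div 2)) < x (2*(j div 2)+1)" by (rule mg_facts(6)[OF mg n])
  show ?thesis
  proof (cases "even j")
    case True
    then have "j = 2*(j div 2)" by simp
    then show ?thesis using lt unfolding edge_def by (metis atLeastAtMost_iff less_eq_real_def order_refl)
  next
    case False
    then have "j = 2*(j div 2)+1" by simp
    then show ?thesis using lt unfolding edge_def by (metis atLeastAtMost_iff less_eq_real_def order_refl)
  qed
qed

lemma Mset_astN_0:
  assumes mg: "metric_graph E x Vs" and BV: "B \<subseteq> Vs"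
  shows "Mset E x (eigfun_astN E x Vs B) 0 = {m. \<exists>a. (\<forall>i<m. a i \<in> Ksp E Vs B) \<and> indep_idx E m a}"
proof (intro equalityI subsetI)
  fix m assume "m \<in> Mset E x (eigfun_astN E x Vs B) 0"
  then obtain phi where ph: "\<forall>i<m. eigfun_astN E x Vs B 0 (phi i)" and li: "lin_indep E x m phi"
    unfolding Mset_def by blast
  define a where "a i = (\<lambda>n. if n < E then phi i n (x (2*n)) else 0)" for i
  have C1: "\<forall>n<E. \<forall>t\<in>edge x n. phi i n t = phi i n (x (2*n))" if "i < m" for i
    using astN_zero_const(1)[OF mg BV ph[rule_format, OF that]] unfolding endval_def by simp
  have C2: "\<forall>v\<in>Vs - B. (\<Sum>j\<in>v. endval (phi i) x j) = 0" if "i < m" for i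
    using astN_zero_const(2)[OF mg BV ph[rule_format, OF that]] .
  have aK: "a i \<in> Ksp E Vs B" if i: "i < m" for i
  proof -
    have "a i \<in> Wsp E" unfolding a_def Wsp_def by simp
    moreover have "Lsum (a i) v = 0" if v: "v \<in> Vs - B" for v
    proof -
      have "Lsum (a i) v = (\<Sum>j\<in>v. endval (phi i) x j)"
        unfolding Lsum_def
      proof (rule sum.cong[OF refl])
        fix j assume j: "j \<in> v"
        have jE: "j < 2*E" using mg_facts(3)[OF mg _ j] v by blast
        then have n: "j div 2 < E" by simp
        have "phi i (j div 2) (x j) = phi i (j div 2) (x (2*(j div 2)))"
          using C1[OF i] n endpoint_in_edge[OF mg jE] by blast
        then show "a i (j div 2) = endval (phi i) x j" unfolding a_def endval_def using n by simp
      qed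
      also have "\<dots> = 0" using C2[OF i] v by blast
      finally show ?thesis .
    qed
    ultimately show ?thesis unfolding Ksp_def by blast
  qed
  have "indep_idx E m a"
    unfolding indep_idx_def
  proof (rule allI, rule impI)
    fix c assume H: "\<forall>n<E. (\<Sum>i<m. c i * a i n) = 0"
    have "\<forall>n<E. \<forall>t\<in>edge x n. (\<Sum>i<m. c i * phi i n t) = 0"
    proof (intro allI impI ballI)
      fix n t assume n: "n < E" and t: "t \<in> edge x n"
      have "(\<Sum>i<m. c i * phi i n t) = (\<Sum>i<m. c i * a i n)"
      proof (rule sum.cong[OF refl])
        fix i assume i: "i \<in> {..<m}"
        have "phi i n t = phi i n (x (2*n))" using C1 i n t by blast
        then show "c i * phi i n t = c i * a i n" unfolding a_def using n by simp
      qed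
      then show "(\<Sum>i<m. c i * phi i n t) = 0" using H n by simp
    qed
    then show "\<forall>i<m. c i = 0" using li unfolding lin_indep_def by blast
  qed
  then show "m \<in> {m. \<exists>a. (\<forall>i<m. a i \<in> Ksp E Vs B) \<and> indep_idx E m a}" using aK by blast
next
  fix m assume "m \<in> {m. \<exists>a. (\<forall>i<m. a i \<in> Ksp E Vs B) \<and> indep_idx E m a}"
  then obtain a where aK: "\<forall>i<m. a i \<in> Ksp E Vs B" and ind: "indep_idx E m a" by blast
  define phi where "phi i = (\<lambda>n (t::real). a i n)" for i
  have "eigfun_astN E x Vs B 0 (phi i)" if i: "i < m" for i
    unfolding eigfun_astN_def
  proof (intro exI[of _ "\<lambda>n t. 0"] conjI)
    show "solves_edges E x 0 (phi i) (\<lambda>n t. 0)"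
      unfolding solves_edges_iff phi_def by simp
    show "\<forall>v\<in>B. \<forall>j\<in>v. endder (\<lambda>n t. 0) x j = 0" unfolding endder_def by simp
    show "\<forall>v\<in>Vs - B. antistandard_cond v (endval (phi i) x) (endder (\<lambda>n t. 0) x)"
    proof
      fix v assume v: "v \<in> Vs - B"
      have "(\<Sum>j\<in>v. endval (phi i) x j) = Lsum (a i) v" unfolding Lsum_def endval_def phi_def ..
      also have "\<dots> = 0" using aK i v unfolding Ksp_def by blast
      finally show "antistandard_cond v (endval (phi i) x) (endder (\<lambda>n t. 0) x)"
        unfolding antistandard_cond_def endder_def by simp
    qed
  qed
  moreover have "lin_indep E x m phi"
    unfolding lin_indep_def
  proof (rule allI, rule impI)
    fix c assume H: "\<forall>n<E. \<forall>t\<in>edge x n. (\<Sum>i<m. c i * phi i n t) = 0"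
    have "\<forall>n<E. (\<Sum>i<m. c i * a i n) = 0"
    proof (intro allI impI)
      fix n assume n: "n < E"
      have "x (2*n) \<in> edge x n" using mg_facts(6)[OF mg n] unfolding edge_def by simp
      then show "(\<Sum>i<m. c i * a i n) = 0" using H n unfolding phi_def by blast
    qed
    then show "\<forall>i<m. c i = 0" using ind unfolding indep_idx_def by blast
  qed
  ultimately show "m \<in> Mset E x (eigfun_astN E x Vs B) 0" unfolding Mset_def by blast
qed

lemma mult_astN_0:
  assumes mg: "metric_graph E x Vs" and conn: "graph_connected E Vs" and bi: "bipartite E Vs"
    and BV: "B \<subseteq> Vs" and Bne: "B \<noteq> {}"
  shows "multiplicity E x (eigfun_astN E x Vs B) 0 + card (Vs - B) = E"
proof -
  have nl: "\<forall>n<E. \<forall>v\<in>Vs. \<not> (2*n \<in> v \<and> 2*n+1 \<in> v)" by (rule no_loop[OF bi mg])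
  obtain q a where aK: "\<forall>i<q. a i \<in> Ksp E Vs B" and ind: "indep_idx E q a"
    and Eb: "E \<le> q + card (Vs - B)"
    using lower[OF mg conn nl BV Bne] by blast
  let ?M = "Mset E x (eigfun_astN E x Vs B) 0"
  have M: "?M = {m. \<exists>a. (\<forall>i<m. a i \<in> Ksp E Vs B) \<and> indep_idx E m a}" by (rule Mset_astN_0[OF mg BV])
  have up: "m + card (Vs - B) \<le> E" if "m \<in> ?M" for m
  proof -
    from that obtain b where "\<forall>i<m. b i \<in> Ksp E Vs B" "indep_idx E m b" unfolding M by blast
    then show ?thesis using upper[OF mg conn nl BV Bne] by blast
  qed
  have qin: "q \<in> ?M" unfolding M using aK ind by blast
  have qE: "q + card (Vs - B) = E" using up[OF qin] Eb by simp
  have "Sup ?M = q"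
  proof (rule cSup_eq_maximum[OF qin])
    fix m assume "m \<in> ?M"
    then show "m \<le> q" using up qE by fastforce
  qed
  then show ?thesis using qE by (simp add: mult_Mset)
qed

theorem mainTheorem9:
  fixes E :: nat and x :: "nat \<Rightarrow> real" and Vs B :: "nat set set"
  assumes "metric_graph E x Vs"
    and "graph_connected E Vs"
    and "bipartite E Vs"
    and "B \<subseteq> boundary Vs"
    and "B \<noteq> {}"
  shows "\<forall>k\<ge>1. eigenvalue E x (eigfun_astN E x Vs B)
                   (nat (int k + betti E Vs + int (card B) - 1))
             = eigenvalue E x (eigfun_stD E x Vs B) k"
proof -
  note mg = assms(1) and conn = assms(2) and bi = assms(3) and Bne = assms(5)
  have BV: "B \<subseteq> Vs" using assms(4) unfolding boundary_def by auto
  have "\<exists>V1. V1 \<subseteq> Vs \<and> (\<forall>n<E. \<forall>v\<in>Vs. \<forall>w\<in>Vs. 2*n \<in> v \<longrightarrow> 2*n+1 \<in> w \<longrightarrow> (v \<in> V1 \<longleftrightarrow> w \<notin> V1))"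
    using bi unfolding bipartite_def .
  then obtain V1 where V1b: "V1 \<subseteq> Vs \<and> (\<forall>n<E. \<forall>v\<in>Vs. \<forall>w\<in>Vs. 2*n \<in> v \<longrightarrow> 2*n+1 \<in> w \<longrightarrow> (v \<in> V1 \<longleftrightarrow> w \<notin> V1))"
    by (rule exE)
  have V1: "V1 \<subseteq> Vs" using V1b by (rule conjunct1)
  have bip: "\<forall>n<E. \<forall>v\<in>Vs. \<forall>w\<in>Vs. 2*n \<in> v \<longrightarrow> 2*n+1 \<in> w \<longrightarrow> (v \<in> V1 \<longleftrightarrow> w \<notin> V1)"
    using V1b by (rule conjunct2)
  define Ps where "Ps = eigfun_stD E x Vs B"
  define Pa where "Pa = eigfun_astN E x Vs B"
  define ms where "ms = multiplicity E x Ps"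
  define ma where "ma = multiplicity E x Pa"
  define D where "D = ma 0"
  have DE: "D + card (Vs - B) = E" unfolding D_def ma_def Pa_def by (rule mult_astN_0[OF mg conn bi BV Bne])
  have eqm: "ma lam = ms lam" if "lam \<noteq> 0" for lam
  proof -
    have "Mset E x (eigfun_astN E x Vs B) lam = Mset E x (eigfun_stD E x Vs B) lam"
      by (rule subset_antisym[OF M_a_to_st[OF mg V1 bip BV that] M_st_to_a[OF mg V1 bip BV that]])
    then show ?thesis unfolding ma_def ms_def Pa_def Ps_def mult_Mset by simp
  qed
  have s0: "ms lam = 0" if "lam \<le> 0" for lam
    unfolding ms_def Ps_def
    by (rule mult_zero) (use stD_nonpos_zero[OF mg conn BV Bne _ that] in blast)
  have a0: "ma lam = 0" if "lam < 0" for lam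
    unfolding ma_def Pa_def
    by (rule mult_zero) (use astN_neg_zero[OF mg BV _ that] in blast)
  have finVs: "finite Vs" by (rule mg_facts(1)[OF mg])
  have finB: "finite B" using finVs BV by (rule finite_subset[rotated])
  have cardD: "card (Vs - B) = card Vs - card B" by (rule card_Diff_subset[OF finB BV])
  have cBV: "card B \<le> card Vs" by (rule card_mono[OF finVs BV])
  have idx: "nat (int k + betti E Vs + int (card B) - 1) = k + D" for k
    using DE cardD cBV unfolding betti_def by simp
  have key: "(k + D \<le> count_eig E x Pa mu) \<longleftrightarrow> (k \<le> count_eig E x Ps mu)" if k: "k \<ge> 1" for k mu
  proof -
    define Ss where "Ss = {lam. lam \<le> mu \<and> ms lam > 0}"
    define Sa where "Sa = {lam. lam \<le> mu \<and> ma lam > 0}"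
    have cs: "count_eig E x Ps mu = (\<Sum>lam\<in>Ss. ms lam)" unfolding count_eig_def Ss_def ms_def ..
    have ca: "count_eig E x Pa mu = (\<Sum>lam\<in>Sa. ma lam)" unfolding count_eig_def Sa_def ma_def ..
    show ?thesis
    proof (cases "mu < 0")
      case True
      have "Ss = {}" unfolding Ss_def using s0 True by force
      moreover have "Sa = {}" unfolding Sa_def using a0 True by force
      ultimately show ?thesis using cs ca k by simp
    next
      case False
      have z: "0 \<notin> Ss" unfolding Ss_def using s0 by simp
      have Sa_eq: "Sa = Ss \<union> (if D > 0 then {0} else {})"
      proof (intro equalityI subsetI)
        fix lam assume "lam \<in> Sa"
        then show "lam \<in> Ss \<union> (if D > 0 then {0} else {})"
          unfolding Sa_def Ss_def D_def using eqm[of lam] by (cases "lam = 0") auto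
      next
        fix lam assume "lam \<in> Ss \<union> (if D > 0 then {0} else {})"
        then show "lam \<in> Sa"
          unfolding Sa_def Ss_def D_def using eqm[of lam] s0[of 0] False by (cases "lam = 0") (auto split: if_splits)
      qed
      have same: "(\<Sum>lam\<in>Ss. ma lam) = (\<Sum>lam\<in>Ss. ms lam)"
        by (rule sum.cong[OF refl]) (use z eqm in metis)
      show ?thesis
      proof (cases "finite Ss")
        case True
        have "count_eig E x Pa mu = D + count_eig E x Ps mu"
        proof (cases "D > 0")
          case Dp: True
          then have "Sa = insert 0 Ss" using Sa_eq by simp
          then have "(\<Sum>lam\<in>Sa. ma lam) = ma 0 + (\<Sum>lam\<in>Ss. ma lam)" using True z by simp
          then show ?thesis using ca cs same unfolding D_def by simp
        next
          case Dz: False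
          then have "Sa = Ss" using Sa_eq by simp
          then show ?thesis using ca cs same Dz by simp
        qed
        then show ?thesis by simp
      next
        case False
        have "infinite Sa" using False Sa_eq by auto
        then show ?thesis using False ca cs k by simp
      qed
    qed
  qed
  show ?thesis
  proof (intro allI impI)
    fix k :: nat assume k: "k \<ge> 1"
    have "(\<lambda>mu. nat (int k + betti E Vs + int (card B) - 1) \<le> count_eig E x Pa mu) =
          (\<lambda>mu. k \<le> count_eig E x Ps mu)"
      using key[OF k] idx[of k] by simp
    then show "eigenvalue E x (eigfun_astN E x Vs B) (nat (int k + betti E Vs + int (card B) - 1))
             = eigenvalue E x (eigfun_stD E x Vs B) k"
      unfolding eigenvalue_def Pa_def Ps_def by simp
  qed
qed

end
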